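(* Let $S\le T_n$ be a transformation monoid and $G$ the normalizer of $S$ in $S_n$. Then $SG$ is regular if and only if $S$ is regular.
   Context: A transformation monoid is a subsemigroup of $T_n$ containing the identity map; $G=\{g\in S_n:g^{-1}Sg=S\}$ and $SG=\{sg:s\in S,g\in G\}$, a semigroup. A semigroup $U$ is regular if for every $a\in U$ there exists $a'\in U$ with $a=aa'a$. *)

theory Defs
  imports Main
begin

text \<open>Transformations of the n-element set {0..<n}, represented as functions on nat
  that fix every point outside {0..<n}. Maps act on the right: x(fg) = (xf)g.\<close>

definition Tn :: "nat \<Rightarrow> (nat \<Rightarrow> nat) set" where
  "Tn n = {f. f ` {..<n} \<subseteq> {..<n} \<and> (\<forall>i\<ge>n. f i = i)}"

definition Sn :: "nat \<Rightarrow> (nat \<Rightarrow> nat) set" where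
  "Sn n = {f \<in> Tn n. bij_betw f {..<n} {..<n}}"

definition tmul :: "(nat \<Rightarrow> nat) \<Rightarrow> (nat \<Rightarrow> nat) \<Rightarrow> (nat \<Rightarrow> nat)" where
  "tmul f g = g \<circ> f"

definition transformation_monoid :: "nat \<Rightarrow> (nat \<Rightarrow> nat) set \<Rightarrow> bool" where
  "transformation_monoid n S \<longleftrightarrow> S \<subseteq> Tn n \<and> id \<in> S \<and>
     (\<forall>f\<in>S. \<forall>g\<in>S. tmul f g \<in> S)"

definition normalizer :: "nat \<Rightarrow> (nat \<Rightarrow> nat) set \<Rightarrow> (nat \<Rightarrow> nat) set" where
  "normalizer n S = {g \<in> Sn n. \<exists>h\<in>Sn n. tmul g h = id \<and> tmul h g = id \<and>
       (\<lambda>s. tmul (tmul h s) g) ` S = S}"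

definition setmul :: "(nat \<Rightarrow> nat) set \<Rightarrow> (nat \<Rightarrow> nat) set \<Rightarrow> (nat \<Rightarrow> nat) set" where
  "setmul S G = {tmul s g | s g. s \<in> S \<and> g \<in> G}"

definition regular :: "(nat \<Rightarrow> nat) set \<Rightarrow> bool" where
  "regular U \<longleftrightarrow> (\<forall>a\<in>U. \<exists>a'\<in>U. tmul (tmul a a') a = a)"

end

theory Submission
  imports Defs "HOL-Combinatorics.Cycles"
begin

lemma norm_props:
  assumes "g \<in> normalizer n S"
  obtains h where "g \<circ> h = id" "h \<circ> g = id" "\<And>s. s \<in> S \<Longrightarrow> g \<circ> s \<circ> h \<in> S"
    "\<And>s. s \<in> S \<Longrightarrow> h \<circ> s \<circ> g \<in> S" "h \<in> normalizer n S"
proof -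
  from assms obtain h where g: "g \<in> Sn n" and h: "h \<in> Sn n" and gh: "g \<circ> h = id" and hg: "h \<circ> g = id"
    and im: "(\<lambda>s. g \<circ> s \<circ> h) ` S = S"
    unfolding normalizer_def tmul_def by (auto simp: o_assoc)
  have ghp: "\<And>x. g (h x) = x" using gh by (metis comp_apply id_apply)
  have hgp: "\<And>x. h (g x) = x" using hg by (metis comp_apply id_apply)
  have 1: "\<And>s. s \<in> S \<Longrightarrow> g \<circ> s \<circ> h \<in> S" using im by blast
  have 2: "h \<circ> s \<circ> g \<in> S" if "s \<in> S" for s
  proof -
    from that im obtain s' where "s' \<in> S" "s = g \<circ> s' \<circ> h" by blast
    then have "h \<circ> s \<circ> g = s'" by (auto simp: fun_eq_iff hgp)
    with \<open>s' \<in> S\<close> show ?thesis by simp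
  qed
  have im2: "(\<lambda>s. h \<circ> s \<circ> g) ` S = S"
  proof
    show "(\<lambda>s. h \<circ> s \<circ> g) ` S \<subseteq> S" using 2 by blast
    show "S \<subseteq> (\<lambda>s. h \<circ> s \<circ> g) ` S"
    proof
      fix s assume "s \<in> S"
      then have "g \<circ> s \<circ> h \<in> S" using 1 by blast
      moreover have "s = h \<circ> (g \<circ> s \<circ> h) \<circ> g" by (auto simp: fun_eq_iff hgp)
      ultimately show "s \<in> (\<lambda>s. h \<circ> s \<circ> g) ` S" by blast
    qed
  qed
  have "h \<in> normalizer n S"
    unfolding normalizer_def tmul_def using h g gh hg im2 by (auto simp: o_assoc)
  then show ?thesis using that gh hg 1 2 by blast
qed

lemma norm_order:
  assumes "g \<in> normalizer n S"
  obtains m where "g ^^ m = id" "m > 0"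
proof -
  from assms have g: "g \<in> Tn n" "bij_betw g {..<n} {..<n}"
    unfolding normalizer_def Sn_def by auto
  have "g permutes {..<n}"
    by (rule bij_imp_permutes) (use g in \<open>auto simp: Tn_def\<close>)
  then have "permutation g" using permutation_permutes by blast
  then show ?thesis using permutation_is_nilpotent that by blast
qed

lemma id_norm: "transformation_monoid n S \<Longrightarrow> id \<in> normalizer n S"
  unfolding normalizer_def Sn_def Tn_def tmul_def by (auto simp: bij_betw_def)

lemma aux: "(\<And>x. H (G x) = x) \<Longrightarrow> a\<circ>y\<circ>G\<circ>t\<circ>a\<circ>g\<circ>t = a\<circ>(y\<circ>(G\<circ>(t\<circ>a)\<circ>H))\<circ>(G\<circ>g)\<circ>t"
  by (simp add: fun_eq_iff)

theorem corollary4p5: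
  fixes n :: nat and S :: "(nat \<Rightarrow> nat) set"
  assumes "transformation_monoid n S"
  shows "regular (setmul S (normalizer n S)) \<longleftrightarrow> regular S"
proof
  have clos: "\<And>f g. f \<in> S \<Longrightarrow> g \<in> S \<Longrightarrow> g \<circ> f \<in> S"
    using assms unfolding transformation_monoid_def tmul_def by blast
  assume R: "regular (setmul S (normalizer n S))"
  show "regular S"
    unfolding regular_def tmul_def
  proof
    fix a assume aS: "a \<in> S"
    have "a \<in> setmul S (normalizer n S)"
      unfolding setmul_def tmul_def using aS id_norm[OF assms] comp_id[of a, symmetric] id_comp[of a, symmetric] by blast
    with R obtain a' where a'm: "a' \<in> setmul S (normalizer n S)" and ea: "a \<circ> a' \<circ> a = a"
      unfolding regular_def tmul_def by (auto simp: o_assoc)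
    from a'm obtain t g where tS: "t \<in> S" and gG: "g \<in> normalizer n S" and a': "a' = g \<circ> t"
      unfolding setmul_def tmul_def by auto
    have eq: "a \<circ> (g \<circ> t) \<circ> a = a" using ea a' by simp
    obtain h where gh: "g \<circ> h = id" and hg: "h \<circ> g = id" and conj: "\<And>s. s \<in> S \<Longrightarrow> g \<circ> s \<circ> h \<in> S"
      using norm_props[OF gG] by blast
    have hgp: "\<And>x. h (g x) = x" using hg by (metis comp_apply id_apply)
    have ghp: "\<And>x. g (h x) = x" using gh by (metis comp_apply id_apply)
    have hgi: "h ^^ i \<circ> g ^^ i = id" for i
    proof (induction i)
      case (Suc i)
      have e1: "h ^^ Suc i = h ^^ i \<circ> h" by (rule funpow_Suc_right)
      have e2: "g ^^ Suc i = g \<circ> g ^^ i" by simp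
      have "h ^^ Suc i \<circ> g ^^ Suc i = h ^^ i \<circ> (h \<circ> g) \<circ> g ^^ i"
        unfolding e1 e2 by (simp add: o_assoc)
      also have "\<dots> = id" using Suc hg by (simp only: comp_id)
      finally show ?case .
    qed simp
    have conji: "s \<in> S \<Longrightarrow> g ^^ i \<circ> s \<circ> h ^^ i \<in> S" for s i
    proof (induction i)
      case (Suc i)
      then have "g \<circ> (g ^^ i \<circ> s \<circ> h ^^ i) \<circ> h \<in> S" using conj by blast
      moreover have "h ^^ Suc i = h ^^ i \<circ> h" by (rule funpow_Suc_right)
      moreover have "g ^^ Suc i = g \<circ> g ^^ i" by simp
      ultimately show ?case by (metis o_assoc)
    qed simp
    define c where "c = a \<circ> g \<circ> t"
    have P: "\<exists>y\<in>S. c ^^ Suc j = a \<circ> y \<circ> g ^^ Suc j \<circ> t" for j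
    proof (induction j)
      case 0
      have "id \<in> S" using assms unfolding transformation_monoid_def by blast
      moreover have "c ^^ Suc 0 = a \<circ> id \<circ> g ^^ Suc 0 \<circ> t" unfolding c_def by simp
      ultimately show ?case by blast
    next
      case (Suc j)
      then obtain y where yS: "y \<in> S" and cy: "c ^^ Suc j = a \<circ> y \<circ> g ^^ Suc j \<circ> t" by blast
      have z: "g ^^ Suc j \<circ> (t \<circ> a) \<circ> h ^^ Suc j \<in> S"
        using conji clos aS tS by blast
      have "c ^^ Suc (Suc j) = c ^^ Suc j \<circ> c" by (simp only: funpow_Suc_right)
      also have "\<dots> = a \<circ> y \<circ> g ^^ Suc j \<circ> t \<circ> a \<circ> g \<circ> t" using cy c_def by (simp add: o_assoc)
      also have "\<dots> = a \<circ> (y \<circ> (g ^^ Suc j \<circ> (t \<circ> a) \<circ> h ^^ Suc j)) \<circ> (g ^^ Suc j \<circ> g) \<circ> t"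
        by (rule aux) (metis comp_apply id_apply hgi)
      also have "\<dots> = a \<circ> (y \<circ> (g ^^ Suc j \<circ> (t \<circ> a) \<circ> h ^^ Suc j)) \<circ> g ^^ Suc (Suc j) \<circ> t"
        by (simp only: funpow_Suc_right[of "Suc j" g])
      finally show ?case using clos[OF z yS] by blast
    qed
    have ca: "c ^^ j \<circ> a = a" for j
    proof (induction j)
      case (Suc j)
      have "c ^^ Suc j \<circ> a = c ^^ j \<circ> (c \<circ> a)" by (simp only: funpow_Suc_right o_assoc)
      also have "c \<circ> a = a" using eq c_def by (simp add: o_assoc)
      finally show ?case using Suc by simp
    qed simp
    obtain m where gm: "g ^^ m = id" and m0: "m > 0" using norm_order[OF gG] by blast
    then obtain j where mj: "m = Suc j" using gr0_implies_Suc by blast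
    obtain y where yS: "y \<in> S" and cy: "c ^^ Suc j = a \<circ> y \<circ> g ^^ Suc j \<circ> t" using P by blast
    have gm': "g ^^ Suc j = id" using gm mj by (simp only:)
    have "a = c ^^ Suc j \<circ> a" by (rule ca[symmetric])
    also have "\<dots> = a \<circ> y \<circ> g ^^ Suc j \<circ> t \<circ> a" using cy by (simp only:)
    also have "\<dots> = a \<circ> (y \<circ> t) \<circ> a" unfolding gm' by (simp only: comp_id o_assoc)
    finally have "a = a \<circ> (y \<circ> t) \<circ> a" .
    moreover have "y \<circ> t \<in> S" using clos yS tS by blast
    ultimately show "\<exists>a'\<in>S. a \<circ> (a' \<circ> a) = a" by (metis o_assoc)
  qed
next
  assume R: "regular S"
  show "regular (setmul S (normalizer n S))"
    unfolding regular_def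
  proof
    fix b assume "b \<in> setmul S (normalizer n S)"
    then obtain s g where sS: "s \<in> S" and gG: "g \<in> normalizer n S" and b: "b = g \<circ> s"
      unfolding setmul_def tmul_def by auto
    obtain h where gh: "g \<circ> h = id" and hg: "h \<circ> g = id" and conj: "\<And>s. s \<in> S \<Longrightarrow> g \<circ> s \<circ> h \<in> S"
      and hG: "h \<in> normalizer n S"
      using norm_props[OF gG] by blast
    from R sS obtain s' where s'S: "s' \<in> S" and ss: "s \<circ> s' \<circ> s = s"
      unfolding regular_def tmul_def by (auto simp: o_assoc)
    have "s' \<circ> h = h \<circ> (g \<circ> s' \<circ> h)" using hg by (simp add: o_assoc)
    then have mem: "s' \<circ> h \<in> setmul S (normalizer n S)"
      unfolding setmul_def tmul_def using conj[OF s'S] hG by blast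
    have "b \<circ> (s' \<circ> h) \<circ> b = g \<circ> (s \<circ> s' \<circ> (h \<circ> g) \<circ> s)" using b by (simp add: o_assoc)
    also have "\<dots> = b" using hg ss b by simp
    finally show "\<exists>a'\<in>setmul S (normalizer n S). tmul (tmul b a') b = b"
      using mem unfolding tmul_def by (metis o_assoc)
  qed
qed

end
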